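(* Let $\lambda>0$, $h\in C^2([0,1])$, $\varrho_\lambda(s)=\frac{\lambda}{(1-s)^2}\exp\!\big[-\frac{\lambda s}{1-s}\big]$ for $s\in[0,1)$, and $\tilde h(s)=h(s)-\int_0^1\mathrm dx\,\varrho_\lambda(x)h(x)$. Then the function $G:(0,1)\to\mathbb R$, $$G(s)=\frac1s\exp\Big[\frac{\lambda}{1-s}\Big]\int_0^s\mathrm dx\,\frac{\tilde h(x)}{(1-x)^2}\exp\Big[\frac{-\lambda}{1-x}\Big],$$ has a continuous extension to $[0,1]$ which lies in $C^2([0,1])$.
   Context: $C^2([0,1])$ denotes twice continuously differentiable functions on $[0,1]$, with one-sided derivatives at the endpoints. $h$ is real-valued. *)

theory Defs
  imports "HOL-Analysis.Analysis"
begin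

definition C2_on_01 :: "(real \<Rightarrow> real) \<Rightarrow> bool" where
  "C2_on_01 f \<longleftrightarrow> (\<exists>f' f''.
      (\<forall>x\<in>{0..1}. (f has_real_derivative f' x) (at x within {0..1})) \<and>
      (\<forall>x\<in>{0..1}. (f' has_real_derivative f'' x) (at x within {0..1})) \<and>
      continuous_on {0..1} f'')"

definition rho :: "real \<Rightarrow> real \<Rightarrow> real" where
  "rho lam s = lam / (1 - s)^2 * exp (- (lam * s / (1 - s)))"

definition htilde :: "real \<Rightarrow> (real \<Rightarrow> real) \<Rightarrow> real \<Rightarrow> real" where
  "htilde lam h s = h s - integral {0..1} (\<lambda>x. rho lam x * h x)"

definition Gfun :: "real \<Rightarrow> (real \<Rightarrow> real) \<Rightarrow> real \<Rightarrow> real" where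
  "Gfun lam h s = (1 / s) * exp (lam / (1 - s)) *
     integral {0..s} (\<lambda>x. htilde lam h x / (1 - x)^2 * exp (- lam / (1 - x)))"

end

theory Submission
  imports Defs "HOL-Real_Asymp.Real_Asymp"
begin


definition C2on :: "real set \<Rightarrow> (real \<Rightarrow> real) \<Rightarrow> (real \<Rightarrow> real) \<Rightarrow> (real \<Rightarrow> real) \<Rightarrow> bool" where
  "C2on S f f' f'' \<longleftrightarrow> (\<forall>x\<in>S. (f has_real_derivative f' x) (at x within S)) \<and>
     (\<forall>x\<in>S. (f' has_real_derivative f'' x) (at x within S)) \<and> continuous_on S f''"

lemma C2on_D:
  assumes "C2on S f f' f''"
  shows "\<And>x. x\<in>S \<Longrightarrow> (f has_real_derivative f' x) (at x within S)"
    "\<And>x. x\<in>S \<Longrightarrow> (f' has_real_derivative f'' x) (at x within S)"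
    "continuous_on S f''" "continuous_on S f'" "continuous_on S f"
  using assms unfolding C2on_def by (auto intro: DERIV_continuous_on)

lemma C2on_mult:
  assumes f: "C2on S f f' f''" and g: "C2on S g g' g''"
  shows "C2on S (\<lambda>x. f x * g x) (\<lambda>x. f' x * g x + f x * g' x)
     (\<lambda>x. f'' x * g x + 2 * (f' x * g' x) + f x * g'' x)"
  unfolding C2on_def
proof (intro conjI ballI)
  note F = C2on_D[OF f] and G = C2on_D[OF g]
  fix x assume x: "x \<in> S"
  show "((\<lambda>x. f x * g x) has_real_derivative f' x * g x + f x * g' x) (at x within S)"
    using F(1)[OF x] G(1)[OF x] by (auto intro!: derivative_eq_intros)
  show "((\<lambda>x. f' x * g x + f x * g' x) has_real_derivative
     f'' x * g x + 2 * (f' x * g' x) + f x * g'' x) (at x within S)"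
    using F(1,2)[OF x] G(1,2)[OF x] by (auto intro!: derivative_eq_intros simp: algebra_simps)
next
  note F = C2on_D[OF f] and G = C2on_D[OF g]
  show "continuous_on S (\<lambda>x. f'' x * g x + 2 * (f' x * g' x) + f x * g'' x)"
    using F(3-5) G(3-5) by (intro continuous_intros)
qed

lemma C2on_add:
  assumes f: "C2on S f f' f''" and g: "C2on S g g' g''"
  shows "C2on S (\<lambda>x. f x + g x) (\<lambda>x. f' x + g' x) (\<lambda>x. f'' x + g'' x)"
  using C2on_D[OF f] C2on_D[OF g] unfolding C2on_def
  by (auto intro!: derivative_eq_intros continuous_intros)

lemma C2on_const: "C2on S (\<lambda>x. c) (\<lambda>x. 0) (\<lambda>x. 0)"
  unfolding C2on_def by (auto intro!: derivative_eq_intros continuous_intros)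

lemma C2on_subset:
  assumes "C2on S f f' f''" "T \<subseteq> S"
  shows "C2on T f f' f''"
  using assms unfolding C2on_def by (meson DERIV_subset continuous_on_subset subsetD)

lemma C2on_smooth:
  assumes "\<And>x. x\<in>S \<Longrightarrow> (f has_real_derivative f' x) (at x)"
    "\<And>x. x\<in>S \<Longrightarrow> (f' has_real_derivative f'' x) (at x)" "continuous_on S f''"
  shows "C2on S f f' f''"
  using assms unfolding C2on_def by (auto intro: has_field_derivative_at_within)

lemma C2on_cong:
  assumes "C2on S f f' f''" "\<And>x. x \<in> S \<Longrightarrow> f x = g x"
  shows "C2on S g f' f''"
  using assms unfolding C2on_def
  by (metis has_field_derivative_transform_within zero_less_one)

lemma deriv_interior_eq:
  assumes "(A has_real_derivative A') (at x within S)" "(B has_real_derivative B') (at x within T)"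
    "x \<in> U" "open U" "U \<subseteq> S" "U \<subseteq> T" "\<And>y. y \<in> U \<Longrightarrow> A y = B y"
  shows "A' = B'"
proof -
  have "(A has_real_derivative A') (at x)"
    using DERIV_subset[OF assms(1) assms(5)] unfolding at_within_open[OF assms(3,4)] .
  then have "(B has_real_derivative A') (at x)"
    by (rule has_field_derivative_transform_within_open[OF _ assms(4,3)]) (use assms(7) in auto)
  moreover have "(B has_real_derivative B') (at x)"
    using DERIV_subset[OF assms(2) assms(6)] unfolding at_within_open[OF assms(3,4)] .
  ultimately show ?thesis by (rule DERIV_unique)
qed

lemma C2on_patch:
  assumes A: "C2on {0..b} A A' A''" and B: "C2on {a..1} B B' B''"
    and ab: "0 < a" "a < b" "b < 1" and eq: "\<And>x. a \<le> x \<Longrightarrow> x \<le> b \<Longrightarrow> A x = B x"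
  shows "C2on {0..1} (\<lambda>x. if x \<le> (a+b)/2 then A x else B x)
     (\<lambda>x. if x \<le> (a+b)/2 then A' x else B' x) (\<lambda>x. if x \<le> (a+b)/2 then A'' x else B'' x)"
proof -
  define c where "c = (a+b)/2"
  note AD = C2on_D[OF A] and BD = C2on_D[OF B]
  have eq1: "A' x = B' x" if "a < x" "x < b" for x
    by (rule deriv_interior_eq[OF AD(1) BD(1), of x "{a<..<b}"]) (use that ab eq in auto)
  have eq2: "A'' x = B'' x" if "a < x" "x < b" for x
    by (rule deriv_interior_eq[OF AD(2) BD(2), of x "{a<..<b}"]) (use that ab eq1 in auto)
  have fl: "at x within {0..1} = at x within {0..b}" if "x \<le> c" for x
    by (rule at_within_nhd[of _ "{..<b}"]) (use that ab in \<open>auto simp: c_def\<close>)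
  have fr: "at x within {0..1} = at x within {a..1}" if "x > c" for x
    by (rule at_within_nhd[of _ "{a<..}"]) (use that ab in \<open>auto simp: c_def\<close>)
  have cl: "c - a > 0" "b - c > 0" using ab by (auto simp: c_def)
  let ?g = "\<lambda>x. if x \<le> c then A x else B x"
  let ?g' = "\<lambda>x. if x \<le> c then A' x else B' x"
  let ?g'' = "\<lambda>x. if x \<le> c then A'' x else B'' x"
  have L: "?g y = A y \<and> ?g' y = A' y \<and> ?g'' y = A'' y" if "y \<in> {0..b}" "dist y x < b - c" "x \<le> c" for x y
  proof -
    have "y < b" using that unfolding dist_real_def c_def abs_less_iff by linarith
    then show ?thesis using that eq eq1[of y] eq2[of y] ab by (auto simp: c_def)
  qed
  have R: "?g y = B y \<and> ?g' y = B' y \<and> ?g'' y = B'' y" if "y \<in> {a..1}" "dist y x < c - a" "x > c" for x y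
  proof -
    have "y > a" using that ab unfolding dist_real_def c_def abs_less_iff by linarith
    then show ?thesis using that eq eq1[of y] eq2[of y] ab by (auto simp: c_def)
  qed
  have D1: "(?g has_real_derivative ?g' x) (at x within {0..1})"
   and D2: "(?g' has_real_derivative ?g'' x) (at x within {0..1})"
   and D3: "continuous (at x within {0..1}) ?g''" if x: "x \<in> {0..1}" for x
  proof -
    have "((?g has_real_derivative ?g' x) (at x within {0..1})) \<and>
      (?g' has_real_derivative ?g'' x) (at x within {0..1}) \<and>
      continuous (at x within {0..1}) ?g''"
    proof (cases "x \<le> c")
      case True
      then have xb: "x \<in> {0..b}" using x cl by auto
      have c3: "continuous (at x within {0..b}) A''"
        using AD(3) xb continuous_on_eq_continuous_within by blast
      have "(?g has_real_derivative A' x) (at x within {0..b})"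
        by (rule has_field_derivative_transform_within[OF AD(1)[OF xb] cl(2) xb]) (use L True in auto)
      moreover have "(?g' has_real_derivative A'' x) (at x within {0..b})"
        by (rule has_field_derivative_transform_within[OF AD(2)[OF xb] cl(2) xb]) (use L True in auto)
      moreover have "continuous (at x within {0..b}) ?g''"
        by (rule continuous_transform_within[OF c3 cl(2) xb]) (use L True in auto)
      ultimately show ?thesis unfolding fl[OF True] using True by simp
    next
      case False
      then have xb: "x \<in> {a..1}" "x > c" using x cl by auto
      have c3: "continuous (at x within {a..1}) B''"
        using BD(3) xb continuous_on_eq_continuous_within by blast
      have "(?g has_real_derivative B' x) (at x within {a..1})"
        by (rule has_field_derivative_transform_within[OF BD(1)[OF xb(1)] cl(1) xb(1)]) (use R xb in auto)
      moreover have "(?g' has_real_derivative B'' x) (at x within {a..1})"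
        by (rule has_field_derivative_transform_within[OF BD(2)[OF xb(1)] cl(1) xb(1)]) (use R xb in auto)
      moreover have "continuous (at x within {a..1}) ?g''"
        by (rule continuous_transform_within[OF c3 cl(1) xb(1)]) (use R xb in auto)
      ultimately show ?thesis unfolding fr[OF xb(2)] using False by simp
    qed
    then show "(?g has_real_derivative ?g' x) (at x within {0..1})"
      "(?g' has_real_derivative ?g'' x) (at x within {0..1})"
      "continuous (at x within {0..1}) ?g''" by auto
  qed
  show ?thesis unfolding C2on_def c_def[symmetric]
    using D1 D2 D3 by (auto simp: continuous_on_eq_continuous_within)
qed

lemma C2on_01: "C2on {0..1} f f' f'' \<Longrightarrow> C2_on_01 f"
  unfolding C2on_def C2_on_01_def by (intro exI[of _ f'] exI[of _ f'']) simp



definition fl :: "real \<Rightarrow> nat \<Rightarrow> real \<Rightarrow> real" where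
  "fl c n x = (if x < 1 then exp (- c / (1 - x)) / (1 - x) ^ n else 0)"

lemma fl_deriv:
  assumes "x < 1"
  shows "(fl c n has_real_derivative (real n * fl c (Suc n) x - c * fl c (Suc (Suc n)) x)) (at x)"
proof -
  have u: "1 - x \<noteq> 0" using assms by auto
  have e: "((\<lambda>y. exp (- c / (1 - y))) has_real_derivative exp (- c / (1 - x)) * (- c / (1 - x)^2)) (at x)"
    using assms by (auto intro!: derivative_eq_intros simp: u field_simps power2_eq_square)
  have p: "((\<lambda>y. (1 - y) ^ n) has_real_derivative - (real n * (1 - x) ^ (n - 1))) (at x)"
    by (auto intro!: derivative_eq_intros)
  have "((\<lambda>y. exp (- c / (1 - y)) / (1 - y) ^ n) has_real_derivative
      (real n * fl c (Suc n) x - c * fl c (Suc (Suc n)) x)) (at x)"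
  proof -
    have nz: "(1 - x) ^ n \<noteq> 0" using u by simp
    have eq: "(exp (- c / (1 - x)) * (- c / (1 - x)\<^sup>2) * (1 - x) ^ n - exp (- c / (1 - x)) * - (real n * (1 - x) ^ (n - 1))) /
      ((1 - x) ^ n * (1 - x) ^ n) = real n * fl c (Suc n) x - c * fl c (Suc (Suc n)) x"
    proof -
      have alg: "(E * (- c / u\<^sup>2) * u ^ n - E * - (real n * u ^ (n - 1))) / (u ^ n * u ^ n)
          = real n * (E / u ^ Suc n) - c * (E / u ^ Suc (Suc n))" if "u \<noteq> 0" for u E :: real
      proof (cases n)
        case 0 then show ?thesis using that by (simp add: field_simps power2_eq_square)
      next
        case (Suc k)
        then show ?thesis using that by (simp add: field_simps power2_eq_square)
      qed
      show ?thesis unfolding fl_def using assms alg[OF u, of "exp (- c / (1 - x))"] by simp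
    qed
    show ?thesis by (rule DERIV_cong[OF DERIV_divide[OF e p nz] eq])
  qed
  then show ?thesis
    by (rule has_field_derivative_transform_within_open[of _ _ _ "{..<1}"]) (use assms in \<open>auto simp: fl_def\<close>)
qed

lemma fl_lim: "c > 0 \<Longrightarrow> (fl c n \<longlongrightarrow> 0) (at_left 1)"
proof -
  assume c: "c > 0"
  have "((\<lambda>x. exp (-c/(1-x)) / (1-x)^n) \<longlongrightarrow> 0) (at_left 1)"
    using c by real_asymp
  moreover have "eventually (\<lambda>x. exp (-c/(1-x)) / (1-x)^n = fl c n x) (at_left (1::real))"
  proof -
    have "eventually (\<lambda>x. x < 1) (at_left (1::real))" by (simp add: eventually_at_filter)
    then show ?thesis by eventually_elim (simp add: fl_def)
  qed
  ultimately show ?thesis by (rule Lim_transform_eventually)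
qed

lemma fl_cont: assumes "c > 0" shows "continuous_on {..1} (fl c n)"
  unfolding continuous_on_eq_continuous_within
proof
  fix x :: real assume "x \<in> {..1}"
  show "continuous (at x within {..1}) (fl c n)"
  proof (cases "x < 1")
    case True
    show ?thesis using DERIV_isCont[OF fl_deriv[OF True]] by (rule continuous_at_imp_continuous_at_within)
  next
    case False
    then have x: "x = 1" using \<open>x \<in> {..1}\<close> by auto
    have "at (1::real) within {..1} = at_left 1"
      by (rule at_within_nhd[of _ UNIV]) auto
    then show ?thesis using fl_lim[OF assms] x by (simp add: continuous_within fl_def)
  qed
qed

lemma fl_cont': "c > 0 \<Longrightarrow> S \<subseteq> {..1} \<Longrightarrow> continuous_on S (fl c n)"
  by (rule continuous_on_subset[OF fl_cont])

lemma fl_C2: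
  assumes "c > 0" "b < 1"
  shows "C2on {0..b} (fl c n) (\<lambda>x. real n * fl c (Suc n) x - c * fl c (Suc (Suc n)) x)
     (\<lambda>x. real n * (real (Suc n) * fl c (Suc (Suc n)) x - c * fl c (Suc (Suc (Suc n))) x)
        - c * (real (Suc (Suc n)) * fl c (Suc (Suc (Suc n))) x - c * fl c (Suc (Suc (Suc (Suc n)))) x))"
proof (rule C2on_smooth)
  fix x assume "x \<in> {0..b}"
  then have x: "x < 1" using assms by auto
  show "(fl c n has_real_derivative real n * fl c (Suc n) x - c * fl c (Suc (Suc n)) x) (at x)"
    by (rule fl_deriv[OF x])
  show "((\<lambda>x. real n * fl c (Suc n) x - c * fl c (Suc (Suc n)) x) has_real_derivative
     real n * (real (Suc n) * fl c (Suc (Suc n)) x - c * fl c (Suc (Suc (Suc n))) x)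
        - c * (real (Suc (Suc n)) * fl c (Suc (Suc (Suc n))) x - c * fl c (Suc (Suc (Suc (Suc n)))) x)) (at x)"
    by (rule DERIV_diff[OF DERIV_cmult[OF fl_deriv[OF x]] DERIV_cmult[OF fl_deriv[OF x]]])
next
  have s: "{0..b} \<subseteq> {..1}" using assms by auto
  show "continuous_on {0..b} (\<lambda>x. real n * (real (Suc n) * fl c (Suc (Suc n)) x - c * fl c (Suc (Suc (Suc n))) x)
        - c * (real (Suc (Suc n)) * fl c (Suc (Suc (Suc n))) x - c * fl c (Suc (Suc (Suc (Suc n)))) x))"
    by (intro continuous_intros fl_cont'[OF assms(1) s])
qed



lemma leib_C2:
  fixes f fx fxx :: "real \<Rightarrow> real \<Rightarrow> real"
  assumes U: "convex U"
    and d1: "\<And>s t. s \<in> U \<Longrightarrow> t \<in> {0..1} \<Longrightarrow> ((\<lambda>s. f s t) has_real_derivative fx s t) (at s within U)"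
    and d2: "\<And>s t. s \<in> U \<Longrightarrow> t \<in> {0..1} \<Longrightarrow> ((\<lambda>s. fx s t) has_real_derivative fxx s t) (at s within U)"
    and c0: "continuous_on (U \<times> {0..1}) (\<lambda>p. f (fst p) (snd p))"
    and c1: "continuous_on (U \<times> {0..1}) (\<lambda>p. fx (fst p) (snd p))"
    and c2: "continuous_on (U \<times> {0..1}) (\<lambda>p. fxx (fst p) (snd p))"
  shows "C2on U (\<lambda>s. integral {0..1} (f s)) (\<lambda>s. integral {0..1} (fx s)) (\<lambda>s. integral {0..1} (fxx s))"
proof -
  have ci: "continuous_on {0..1} (g s)"
    if "s \<in> U" "continuous_on (U \<times> {0..1}) (\<lambda>p. g (fst p) (snd p))" for g :: "real \<Rightarrow> real \<Rightarrow> real" and s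
    by (rule continuous_on_compose2[OF that(2), of _ "\<lambda>t. (s, t)", simplified])
       (use that in \<open>auto intro!: continuous_intros\<close>)
  have sp: "(\<lambda>(x, t). g x t) = (\<lambda>p. g (fst p) (snd p))" for g :: "real \<Rightarrow> real \<Rightarrow> real"
    by (auto simp: case_prod_beta)
  show ?thesis unfolding C2on_def
  proof (intro conjI ballI)
    fix x assume x: "x \<in> U"
    show "((\<lambda>s. integral {0..1} (f s)) has_real_derivative integral {0..1} (fx x)) (at x within U)"
      using leibniz_rule_field_derivative[of U 0 1 f fx x] d1 c1 ci[OF _ c0] x U
      by (auto simp: sp intro: integrable_continuous_interval)
    show "((\<lambda>s. integral {0..1} (fx s)) has_real_derivative integral {0..1} (fxx x)) (at x within U)"
      using leibniz_rule_field_derivative[of U 0 1 fx fxx x] d2 c2 ci[OF _ c1] x U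
      by (auto simp: sp intro: integrable_continuous_interval)
  next
    show "continuous_on U (\<lambda>s. integral {0..1} (fxx s))"
      using integral_continuous_on_param[of U 0 1 fxx] c2 by (simp add: sp)
  qed
qed

locale lemsetup =
  fixes lam :: real and h h' h'' :: "real \<Rightarrow> real"
  assumes lam: "lam > 0" and hC2: "C2on {0..1} h h' h''"
begin

abbreviation m where "m \<equiv> (\<lambda>x. htilde lam h x / (1 - x)^2 * exp (- lam / (1 - x)))"

lemma m_fl: "x \<le> 1 \<Longrightarrow> m x = htilde lam h x * fl lam 2 x"
  by (cases "x < 1") (auto simp: fl_def)

lemma rho_fl: assumes "x \<le> 1" shows "rho lam x = lam * exp lam * fl lam 2 x"
proof (cases "x < 1")
  case True
  have "exp (-(lam * x / (1 - x))) = exp lam * exp (- lam / (1 - x))"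
    by (subst exp_add[symmetric], rule arg_cong[where f=exp]) (use True in \<open>simp add: field_simps\<close>)
  then show ?thesis using True by (simp add: rho_def fl_def)
qed (use assms in \<open>auto simp: rho_def fl_def\<close>)

lemma int_fl2: "(fl lam 2 has_integral exp (- lam) / lam) {0..1}"
proof -
  have "(fl lam 2 has_integral ((- fl lam 0 1 / lam) - (- fl lam 0 0 / lam))) {0..1}"
    apply (rule fundamental_theorem_of_calculus_interior[of 0 1 _ "fl lam 2"])
      apply simp
    using lam apply (auto intro!: continuous_intros fl_cont')[1]
    subgoal for x
      unfolding has_real_derivative_iff_has_vector_derivative[symmetric]
      using fl_deriv[of x lam 0] lam by (auto intro!: derivative_eq_intros simp: numeral_2_eq_2)
    done
  then show ?thesis by (simp add: fl_def)
qed

lemma h_cont: "continuous_on {0..1} h" using C2on_D(5)[OF hC2] .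

lemma fl_cont01: "continuous_on {0..1} (fl lam n)" by (rule fl_cont') (use lam in auto)

lemma htilde_cont: "continuous_on {0..1} (htilde lam h)"
  unfolding htilde_def by (intro continuous_intros h_cont)

lemma m_cont: "continuous_on {0..1} m"
proof -
  have "continuous_on {0..1} (\<lambda>x. htilde lam h x * fl lam 2 x)"
    by (auto intro!: continuous_intros htilde_cont fl_cont01)
  moreover have "\<And>x. x \<in> {0..1} \<Longrightarrow> htilde lam h x * fl lam 2 x = m x"
    using m_fl by simp
  ultimately show ?thesis by (rule continuous_on_eq)
qed

lemma int_m0: "(m has_integral 0) {0..1}"
proof -
  define I where "I = integral {0..1} (\<lambda>x. h x * fl lam 2 x)"
  have hI: "((\<lambda>x. h x * fl lam 2 x) has_integral I) {0..1}"
    unfolding I_def by (intro integrable_integral integrable_continuous_interval continuous_intros h_cont fl_cont01)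
  have "((\<lambda>x. lam * exp lam * (h x * fl lam 2 x)) has_integral lam * exp lam * I) {0..1}"
    by (intro has_integral_mult_right hI)
  then have "((\<lambda>x. rho lam x * h x) has_integral lam * exp lam * I) {0..1}"
    by (rule has_integral_eq[rotated]) (simp add: rho_fl)
  then have C: "integral {0..1} (\<lambda>x. rho lam x * h x) = lam * exp lam * I"
    by (rule integral_unique)
  have "((\<lambda>x. h x * fl lam 2 x - integral {0..1} (\<lambda>x. rho lam x * h x) * fl lam 2 x) has_integral
      I - integral {0..1} (\<lambda>x. rho lam x * h x) * (exp (- lam) / lam)) {0..1}"
    by (intro has_integral_diff hI has_integral_mult_right int_fl2)
  moreover have "I - integral {0..1} (\<lambda>x. rho lam x * h x) * (exp (- lam) / lam) = 0"
    unfolding C using lam by (simp add: field_simps exp_minus)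
  ultimately have "((\<lambda>x. h x * fl lam 2 x - integral {0..1} (\<lambda>x. rho lam x * h x) * fl lam 2 x) has_integral 0) {0..1}"
    by simp
  then show ?thesis
    apply (rule has_integral_eq[rotated])
    subgoal for x by (subst m_fl) (auto simp: htilde_def algebra_simps)
    done
qed

end


lemma scale_mem: "r \<in> {0..1} \<Longrightarrow> s \<in> {0..b} \<Longrightarrow> r * s \<in> {0..(b::real)}"
  using mult_left_le_one_le[of s r] by auto

lemma scale_C2:
  assumes g: "C2on {0..b} g g' g''"
  shows "C2on {0..b} (\<lambda>s. integral {0..1} (\<lambda>r. g (r * s))) (\<lambda>s. integral {0..1} (\<lambda>r. g' (r * s) * r))
     (\<lambda>s. integral {0..1} (\<lambda>r. g'' (r * s) * r * r))"
proof -
  note G = C2on_D[OF g]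
  have ch: "((\<lambda>s. k (r * s)) has_real_derivative k' (r * s) * r) (at s within {0..b})"
    if k: "\<And>x. x \<in> {0..b} \<Longrightarrow> (k has_real_derivative k' x) (at x within {0..b})"
      and r: "r \<in> {0..1}" and s: "s \<in> {0..b}" for k k' r s
  proof -
    have "(k has_real_derivative k' (r * s)) (at (r * s) within ((\<lambda>s. r * s) ` {0..b}))"
      by (rule DERIV_subset[OF k]) (use scale_mem r s in auto)
    moreover have "((\<lambda>s. r * s) has_real_derivative r) (at s within {0..b})"
      by (auto intro!: derivative_eq_intros)
    ultimately have "(k \<circ> (\<lambda>s. r * s) has_real_derivative k' (r * s) * r) (at s within {0..b})"
      by (rule DERIV_image_chain)
    then show ?thesis by (simp add: o_def)
  qed
  have cc: "continuous_on ({0..b} \<times> {0..1}) (\<lambda>p. k (snd p * fst p))"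
    if "continuous_on {0..b} k" for k
    by (rule continuous_on_compose2[OF that]) (auto intro!: continuous_intros scale_mem)
  have cc': "continuous_on ({0..b} \<times> {0..1}) (\<lambda>p. k (snd p * fst p) * snd p)"
    if "continuous_on {0..b} k" for k
    using cc[OF that] by (auto intro!: continuous_intros)
  have cc'': "continuous_on ({0..b} \<times> {0..1}) (\<lambda>p. k (snd p * fst p) * snd p * snd p)"
    if "continuous_on {0..b} k" for k
    using cc[OF that] by (auto intro!: continuous_intros)
  show ?thesis
    apply (rule leib_C2[where f="\<lambda>s r. g (r * s)" and fx="\<lambda>s r. g' (r * s) * r" and fxx="\<lambda>s r. g'' (r * s) * r * r"])
         apply simp
        apply (rule ch[OF G(1)]; simp)
    subgoal for s t using ch[OF G(2), of t s] by (auto intro!: derivative_eq_intros)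
      apply (rule cc[OF G(5)])
     apply (rule cc'[OF G(4)])
    apply (rule cc''[OF G(3)])
    done
qed

context lemsetup begin

lemma htC2: "C2on {0..1} (htilde lam h) h' (\<lambda>x. h'' x)"
proof -
  have "C2on {0..1} (\<lambda>x. h x + (- integral {0..1} (\<lambda>x. rho lam x * h x))) (\<lambda>x. h' x + 0) (\<lambda>x. h'' x + 0)"
    by (rule C2on_add[OF hC2 C2on_const])
  then show ?thesis unfolding htilde_def[abs_def] by simp
qed

lemma mC2: "\<exists>m' m''. C2on {0..3/4} m m' m''"
proof -
  have "C2on {0..3/4} (htilde lam h) h' h''" by (rule C2on_subset[OF htC2]) auto
  from C2on_mult[OF this fl_C2[where c=lam and b="3/4" and n=2, OF lam]]
  obtain a b where "C2on {0..3/4} (\<lambda>x. htilde lam h x * fl lam 2 x) a b" by force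
  then have "C2on {0..3/4} m a b"
    by (rule C2on_cong) (subst m_fl; auto)
  then show ?thesis by blast
qed

definition Q where "Q s = integral {0..1} (\<lambda>r. m (r * s))"

lemma Gfun_Q:
  assumes s: "0 < s" "s < 1"
  shows "Gfun lam h s = exp (lam / (1 - s)) * Q s"
proof -
  have "((\<lambda>r. s *\<^sub>R m (r * s)) has_integral integral {0 * s..1 * s} m) {0..1}"
  proof (rule has_integral_substitution[where c=0 and d=1 and g="\<lambda>r. r * s" and f=m])
    show "(\<lambda>r. r * s) ` {0..1} \<subseteq> {0..1}" using s scale_mem[of _ s 1] by auto
    show "continuous_on {0..1} m" by (rule m_cont)
    show "\<And>x. x \<in> {0..1} \<Longrightarrow> ((\<lambda>r. r * s) has_real_derivative s) (at x within {0..1})"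
      by (auto intro!: derivative_eq_intros)
  qed (use s in auto)
  then have i: "integral {0..1} (\<lambda>r. s *\<^sub>R m (r * s)) = integral {0..s} m"
    by (simp only: integral_unique mult_zero_left mult_1_left)
  have "integral {0..s} m = s * Q s" unfolding Q_def i[symmetric] integral_cmul by simp
  then show ?thesis using s unfolding Gfun_def by simp
qed

lemma A_C2: "\<exists>A' A''. C2on {0..3/4} (\<lambda>s. exp (lam / (1 - s)) * Q s) A' A''"
proof -
  obtain m' m'' where "C2on {0..3/4} m m' m''" using mC2 by blast
  from scale_C2[OF this] obtain q' q'' where q: "C2on {0..3/4} Q q' q''" unfolding Q_def[abs_def] by blast
  have inv2: "((\<lambda>u. lam / u^2) has_real_derivative -(2*lam/u^3)) (at u)" if "u \<noteq> 0" for u :: real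
    using that by (auto intro!: derivative_eq_intros simp: field_simps power2_eq_square power3_eq_cube)
  have d_g: "((\<lambda>s. lam / (1 - s)^2) has_real_derivative 2*lam/(1-x)^3) (at x)" if "x < 1" for x :: real
  proof -
    have "((\<lambda>s. lam / (1 - s)^2) has_real_derivative -(2*lam/(1-x)^3) * (-1)) (at x)"
      by (rule DERIV_chain2[OF inv2]) (use that in \<open>auto intro!: derivative_eq_intros\<close>)
    then show ?thesis by simp
  qed
  have d_ex: "((\<lambda>s. exp (lam / (1 - s))) has_real_derivative exp (lam / (1 - x)) * (lam / (1 - x)^2)) (at x)"
    if "x < 1" for x :: real
    using that by (auto intro!: derivative_eq_intros simp: field_simps power2_eq_square)
  have e: "C2on {0..3/4} (\<lambda>s. exp (lam / (1 - s))) (\<lambda>s. exp (lam / (1 - s)) * (lam / (1 - s)^2))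
     (\<lambda>s. exp (lam / (1 - s)) * (2*lam/(1-s)^3) + exp (lam / (1 - s)) * (lam / (1 - s)^2) * (lam / (1 - s)^2))"
  proof (rule C2on_smooth)
    fix x :: real assume "x \<in> {0..3/4}"
    then have x: "x < 1" by auto
    show "((\<lambda>s. exp (lam / (1 - s))) has_real_derivative exp (lam / (1 - x)) * (lam / (1 - x)^2)) (at x)"
      by (rule d_ex[OF x])
    show "((\<lambda>s. exp (lam / (1 - s)) * (lam / (1 - s)^2)) has_real_derivative
       exp (lam / (1 - x)) * (2*lam/(1-x)^3) + exp (lam / (1 - x)) * (lam / (1 - x)^2) * (lam / (1 - x)^2)) (at x)"
      by (rule DERIV_mult'[OF d_ex[OF x] d_g[OF x]])
  next
    show "continuous_on {0..3/4} (\<lambda>s. exp (lam / (1 - s)) * (2*lam/(1-s)^3) + exp (lam / (1 - s)) * (lam / (1 - s)^2) * (lam / (1 - s)^2))"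
      by (intro continuous_intros) auto
  qed
  from C2on_mult[OF e q] show ?thesis by blast
qed

end


lemma wlnw_cont: "continuous_on {0..1} (\<lambda>w::real. w * ln w)"
  unfolding continuous_on_eq_continuous_within
proof
  fix w :: real assume w: "w \<in> {0..1}"
  show "continuous (at w within {0..1}) (\<lambda>w. w * ln w)"
  proof (cases "w = 0")
    case True
    have "((\<lambda>w::real. w * ln w) \<longlongrightarrow> 0) (at_right 0)" by real_asymp
    then show ?thesis using True by (simp add: continuous_within at_within_Icc_at_right)
  next
    case False
    then have "w > 0" using w by auto
    then have "isCont (\<lambda>w. w * ln w) w" by (auto intro!: continuous_intros)
    then show ?thesis by (rule continuous_at_imp_continuous_at_within)
  qed
qed

lemma cont_bound:
  fixes f :: "real \<Rightarrow> real"
  assumes "continuous_on {a..b} f"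
  obtains M where "M \<ge> 0" "\<And>y. y \<in> {a..b} \<Longrightarrow> \<bar>f y\<bar> \<le> M"
proof -
  have "bounded (f ` {a..b})"
    by (rule compact_imp_bounded[OF compact_continuous_image[OF assms compact_Icc]])
  then obtain M where M: "\<forall>y\<in>{a..b}. \<bar>f y\<bar> \<le> M"
    unfolding bounded_real by auto
  show ?thesis
    by (rule that[of "max M 0"]) (use M in \<open>auto simp: le_max_iff_disj\<close>)
qed

lemma cont_box:
  fixes F :: "real \<times> real \<Rightarrow> real" and B :: "real \<Rightarrow> real"
  assumes c: "continuous_on (U \<times> {0<..1}) F"
    and b: "\<And>p. p \<in> U \<times> {0..1} \<Longrightarrow> \<bar>F p\<bar> \<le> B (snd p)"
    and bc: "continuous_on {0..1} B" and b0: "B 0 = 0"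
  shows "continuous_on (U \<times> {0..1}) F"
  unfolding continuous_on_eq_continuous_within
proof
  fix p :: "real \<times> real" assume p: "p \<in> U \<times> {0..1}"
  obtain s w where sw: "p = (s, w)" by (cases p)
  show "continuous (at p within U \<times> {0..1}) F"
  proof (cases "w = 0")
    case False
    then have w: "w > 0" using p sw by auto
    have "at p within U \<times> {0..1} = at p within U \<times> {0<..1}"
      by (rule at_within_nhd[of _ "UNIV \<times> {0<..}"]) (use w sw in \<open>auto simp: open_Times\<close>)
    moreover have "p \<in> U \<times> {0<..1}" using p sw w by auto
    moreover have "continuous (at p within U \<times> {0<..1}) F"
      using c \<open>p \<in> U \<times> {0<..1}\<close> continuous_on_eq_continuous_within by blast
    ultimately show ?thesis by simp
  next
    case True
    have Fp: "F p = 0" using b[OF p] sw True b0 by simp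
    have "continuous_on (U \<times> {0..1}) (\<lambda>q. B (snd q))"
      by (rule continuous_on_compose2[OF bc continuous_on_snd]) auto
    then have "((\<lambda>q. B (snd q)) \<longlongrightarrow> B (snd p)) (at p within U \<times> {0..1})"
      using p unfolding continuous_on_eq_continuous_within continuous_within by blast
    then have t: "((\<lambda>q. B (snd q)) \<longlongrightarrow> 0) (at p within U \<times> {0..1})"
      using sw True b0 by simp
    have ev: "eventually (\<lambda>q. norm (F q) \<le> B (snd q)) (at p within U \<times> {0..1})"
      using b by (auto simp: eventually_at_filter)
    have "(F \<longlongrightarrow> 0) (at p within U \<times> {0..1})"
      by (rule Lim_null_comparison[OF ev t])
    then show ?thesis using Fp by (simp add: continuous_within)
  qed
qed

lemma alg_X:
  fixes p q lam :: real
  assumes "p > 0" "q > 0" "lam > 0"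
  shows "lam * p / (lam - 2 * p * (lam / (2 * p) + - (lam / 2) / q)) = q"
  using assms by (simp add: field_simps)

context lemsetup begin

definition X :: "real \<Rightarrow> real \<Rightarrow> real" where "X s w = 1 - lam * (1 - s) / (lam - 2 * (1 - s) * ln w)"
definition Xs :: "real \<Rightarrow> real \<Rightarrow> real" where "Xs s w = lam^2 / (lam - 2 * (1 - s) * ln w)^2"
definition Xss :: "real \<Rightarrow> real \<Rightarrow> real" where "Xss s w = - (4 * lam^2 * ln w / (lam - 2 * (1 - s) * ln w)^3)"
definition ff where "ff s w = w * htilde lam h (X s w)"
definition ffx where "ffx s w = w * (h' (X s w) * Xs s w)"
definition ffxx where "ffxx s w = w * (h'' (X s w) * (Xs s w)^2 + h' (X s w) * Xss s w)"
definition P where "P s = integral {0..1} (ff s)"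

lemma D_ge: assumes "s \<le> 1" "0 < w" "w \<le> 1" shows "lam \<le> lam - 2 * (1 - s) * ln w"
proof -
  have "ln w \<le> 0" using assms by simp
  moreover have "1 - s \<ge> 0" using assms by simp
  ultimately have "(1 - s) * ln w \<le> 0" by (rule mult_nonneg_nonpos[rotated])
  then show ?thesis by linarith
qed

lemma D_pos: "s \<le> 1 \<Longrightarrow> 0 < w \<Longrightarrow> w \<le> 1 \<Longrightarrow> lam - 2 * (1 - s) * ln w > 0"
  using D_ge[of s w] lam by linarith

lemma X_mem: assumes "0 \<le> s" "s \<le> 1" "0 < w" "w \<le> 1" shows "X s w \<in> {0..1}"
proof -
  let ?D = "lam - 2 * (1 - s) * ln w"
  have D: "lam \<le> ?D" "0 < ?D" using D_ge[of s w] D_pos[of s w] assms by auto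
  have "0 \<le> lam * (1 - s) / ?D" using assms lam D by simp
  moreover have "(1 - s) * lam \<le> (1 - s) * ?D" by (rule mult_left_mono) (use D assms in auto)
  then have "lam * (1 - s) \<le> (1 - s) * ?D" by (metis mult.commute)
  then have "lam * (1 - s) / ?D \<le> 1 - s" using D by (simp add: divide_le_eq)
  ultimately show ?thesis using assms unfolding X_def by auto
qed

lemma X_deriv:
  assumes "s \<le> 1" "0 < w" "w \<le> 1"
  shows "((\<lambda>s. X s w) has_real_derivative Xs s w) (at s)"
proof -
  define L where "L = ln w"
  define D where "D = lam - 2 * (1 - s) * L"
  have Dp: "D > 0" using D_pos[OF assms] by (simp add: D_def L_def)
  have N: "((\<lambda>s. lam * (1 - s)) has_real_derivative - lam) (at s)"
    by (auto intro!: derivative_eq_intros)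
  have Dd: "((\<lambda>s. lam - 2 * (1 - s) * L) has_real_derivative 2 * L) (at s)"
    by (auto intro!: derivative_eq_intros)
  have q: "((\<lambda>s. lam * (1 - s) / (lam - 2 * (1 - s) * L)) has_real_derivative
      (- lam * D - lam * (1 - s) * (2 * L)) / (D * D)) (at s)"
    using DERIV_divide[OF N Dd] Dp by (simp add: D_def)
  have "((\<lambda>s. 1 - lam * (1 - s) / (lam - 2 * (1 - s) * L)) has_real_derivative
      0 - (- lam * D - lam * (1 - s) * (2 * L)) / (D * D)) (at s)"
    by (rule DERIV_diff[OF DERIV_const q])
  moreover have "- (- lam * D - lam * (1 - s) * (2 * L)) = lam^2"
    unfolding D_def by (simp add: algebra_simps power2_eq_square)
  then have "0 - (- lam * D - lam * (1 - s) * (2 * L)) / (D * D) = Xs s w"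
    unfolding Xs_def L_def[symmetric] D_def[symmetric] diff_0 minus_divide_left
    by (simp add: power2_eq_square)
  ultimately show ?thesis unfolding X_def L_def[symmetric] by simp
qed

lemma Xs_deriv:
  assumes "s \<le> 1" "0 < w" "w \<le> 1"
  shows "((\<lambda>s. Xs s w) has_real_derivative Xss s w) (at s)"
proof -
  define L where "L = ln w"
  define D where "D = lam - 2 * (1 - s) * L"
  have Dp: "D > 0" using D_pos[OF assms] by (simp add: D_def L_def)
  have k: "((\<lambda>d. lam^2 / d^2) has_real_derivative -(2*lam^2/D^3)) (at D)"
    using Dp by (auto intro!: derivative_eq_intros simp: field_simps power2_eq_square power3_eq_cube)
  have Dd: "((\<lambda>s. lam - 2 * (1 - s) * L) has_real_derivative 2 * L) (at s)"
    by (auto intro!: derivative_eq_intros)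
  have "((\<lambda>s. lam^2 / (lam - 2 * (1 - s) * L)^2) has_real_derivative -(2*lam^2/D^3) * (2 * L)) (at s)"
    using DERIV_chain2[OF k[unfolded D_def] Dd] by (simp add: D_def)
  moreover have "-(2*lam^2/D^3) * (2 * L) = Xss s w"
    unfolding Xss_def L_def[symmetric] D_def[symmetric] by simp
  ultimately show ?thesis unfolding Xs_def L_def[symmetric] by simp
qed

lemma Xs_bound: assumes "s \<le> 1" "0 < w" "w \<le> 1" shows "0 \<le> Xs s w" "Xs s w \<le> 1"
proof -
  let ?D = "lam - 2 * (1 - s) * ln w"
  have D: "lam \<le> ?D" "0 < ?D" using D_ge[of s w] D_pos[of s w] assms by auto
  show "0 \<le> Xs s w" unfolding Xs_def by simp
  have "lam^2 \<le> ?D^2" using D lam by (intro power_mono) auto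
  then show "Xs s w \<le> 1" unfolding Xs_def using D by simp
qed

lemma Xss_bound: assumes "s \<le> 1" "0 < w" "w \<le> 1" shows "\<bar>Xss s w\<bar> \<le> 4 * \<bar>ln w\<bar> / lam"
proof -
  let ?D = "lam - 2 * (1 - s) * ln w"
  have D: "lam \<le> ?D" "0 < ?D" using D_ge[of s w] D_pos[of s w] assms by auto
  have "\<bar>Xss s w\<bar> = 4 * lam^2 * \<bar>ln w\<bar> / ?D^3"
    unfolding Xss_def using D by (simp add: abs_mult)
  also have "\<dots> \<le> 4 * lam^2 * \<bar>ln w\<bar> / lam^3"
    by (rule frac_le) (use D lam in \<open>auto intro!: power_mono\<close>)
  also have "\<dots> = 4 * \<bar>ln w\<bar> / lam" using lam by (simp add: field_simps power2_eq_square power3_eq_cube)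
  finally show ?thesis .
qed

end


lemma ineq1:
  fixes w a x M :: real
  assumes "0 \<le> w" "\<bar>a\<bar> \<le> M" "0 \<le> x" "x \<le> 1"
  shows "\<bar>w * (a * x)\<bar> \<le> M * w"
proof -
  have "\<bar>a * x\<bar> \<le> \<bar>a\<bar>" using assms mult_right_le_one_le[of "\<bar>a\<bar>" x] by (simp add: abs_mult)
  then have "\<bar>a * x\<bar> \<le> M" using assms by linarith
  then have "w * \<bar>a * x\<bar> \<le> w * M" using assms by (intro mult_left_mono) auto
  then show ?thesis using assms by (simp add: abs_mult mult.commute)
qed

lemma ineq3:
  fixes w a x b c M1 M2 K :: real
  assumes "0 \<le> w" "\<bar>a\<bar> \<le> M2" "0 \<le> x" "x \<le> 1" "\<bar>b\<bar> \<le> M1" "\<bar>c\<bar> \<le> K"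
  shows "\<bar>w * (a * x^2 + b * c)\<bar> \<le> M2 * w + M1 * (w * K)"
proof -
  have x2: "0 \<le> x^2" "x^2 \<le> 1" using assms by (auto simp: power_le_one)
  have "\<bar>a * x^2\<bar> \<le> \<bar>a\<bar>" using x2 mult_right_le_one_le[of "\<bar>a\<bar>" "x^2"] by (simp add: abs_mult)
  then have 1: "\<bar>a * x^2\<bar> \<le> M2" using assms by linarith
  have "\<bar>b * c\<bar> \<le> M1 * K" unfolding abs_mult by (rule mult_mono) (use assms in auto)
  then have "\<bar>a * x^2 + b * c\<bar> \<le> M2 + M1 * K" using 1 abs_triangle_ineq[of "a * x^2" "b * c"] by linarith
  then have p: "w * \<bar>a * x^2 + b * c\<bar> \<le> w * (M2 + M1 * K)" using assms by (intro mult_left_mono) auto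
  have e: "\<bar>w * (a * x^2 + b * c)\<bar> = w * \<bar>a * x^2 + b * c\<bar>" using assms(1) by (simp add: abs_mult)
  have "w * (M2 + M1 * K) = M2 * w + M1 * (w * K)" by (simp add: algebra_simps)
  then show ?thesis using e p by linarith
qed

context lemsetup begin

abbreviation "UU \<equiv> {1/4..1::real}"

lemma ff_d1:
  assumes s: "s \<in> UU" and t: "t \<in> {0..1}"
  shows "((\<lambda>s. ff s t) has_real_derivative ffx s t) (at s within UU)"
proof (cases "t = 0")
  case True then show ?thesis by (simp add: ff_def ffx_def)
next
  case False then have t': "0 < t" "t \<le> 1" using t by auto
  have img: "(\<lambda>s. X s t) ` UU \<subseteq> {0..1}" using X_mem t' by auto
  have hd: "(htilde lam h has_real_derivative h' (X s t)) (at (X s t) within ((\<lambda>s. X s t) ` UU))"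
    by (rule DERIV_subset[OF C2on_D(1)[OF htC2] img]) (use X_mem s t' in auto)
  have xd: "((\<lambda>s. X s t) has_real_derivative Xs s t) (at s within UU)"
    by (rule has_field_derivative_at_within[OF X_deriv]) (use s t' in auto)
  from DERIV_image_chain[OF hd xd]
  have "((\<lambda>s. htilde lam h (X s t)) has_real_derivative h' (X s t) * Xs s t) (at s within UU)"
    by (simp add: o_def)
  then show ?thesis unfolding ff_def ffx_def by (rule DERIV_cmult)
qed

lemma ff_d2:
  assumes s: "s \<in> UU" and t: "t \<in> {0..1}"
  shows "((\<lambda>s. ffx s t) has_real_derivative ffxx s t) (at s within UU)"
proof (cases "t = 0")
  case True then show ?thesis by (simp add: ffx_def ffxx_def)
next
  case False then have t': "0 < t" "t \<le> 1" using t by auto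
  have img: "(\<lambda>s. X s t) ` UU \<subseteq> {0..1}" using X_mem t' by auto
  have hd: "(h' has_real_derivative h'' (X s t)) (at (X s t) within ((\<lambda>s. X s t) ` UU))"
    by (rule DERIV_subset[OF C2on_D(2)[OF htC2] img]) (use X_mem s t' in auto)
  have xd: "((\<lambda>s. X s t) has_real_derivative Xs s t) (at s within UU)"
    by (rule has_field_derivative_at_within[OF X_deriv]) (use s t' in auto)
  have xsd: "((\<lambda>s. Xs s t) has_real_derivative Xss s t) (at s within UU)"
    by (rule has_field_derivative_at_within[OF Xs_deriv]) (use s t' in auto)
  from DERIV_image_chain[OF hd xd]
  have "((\<lambda>s. h' (X s t)) has_real_derivative h'' (X s t) * Xs s t) (at s within UU)"
    by (simp add: o_def)
  from DERIV_cmult[OF DERIV_mult'[OF this xsd], of t]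
  show ?thesis unfolding ffx_def
    by (rule DERIV_cong) (simp add: ffxx_def power2_eq_square algebra_simps)
qed

lemma Xc: "continuous_on (UU \<times> {0<..1}) (\<lambda>p. X (fst p) (snd p))"
proof -
  have nz: "\<forall>p\<in>UU \<times> {0<..1}. lam - 2 * (1 - fst p) * ln (snd p) \<noteq> 0"
    using D_pos by force
  show ?thesis unfolding X_def
    by (intro continuous_intros nz) auto
qed

lemma Xsc: "continuous_on (UU \<times> {0<..1}) (\<lambda>p. Xs (fst p) (snd p))"
proof -
  have nz: "\<forall>p\<in>UU \<times> {0<..1}. (lam - 2 * (1 - fst p) * ln (snd p))^2 \<noteq> 0"
    using D_pos by force
  show ?thesis unfolding Xs_def
    by (intro continuous_intros nz) auto
qed

lemma Xssc: "continuous_on (UU \<times> {0<..1}) (\<lambda>p. Xss (fst p) (snd p))"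
proof -
  have nz: "\<forall>p\<in>UU \<times> {0<..1}. (lam - 2 * (1 - fst p) * ln (snd p))^3 \<noteq> 0"
    using D_pos by force
  show ?thesis unfolding Xss_def
    by (intro continuous_intros nz) auto
qed

lemma Ximg: "(\<lambda>p. X (fst p) (snd p)) ` (UU \<times> {0<..1}) \<subseteq> {0..1}"
  using X_mem by auto

lemma compc: "continuous_on {0..1} g \<Longrightarrow> continuous_on (UU \<times> {0<..1}) (\<lambda>p. g (X (fst p) (snd p)))"
  by (rule continuous_on_compose2[OF _ Xc Ximg])

lemma ff_cont: "continuous_on (UU \<times> {0..1}) (\<lambda>p. ff (fst p) (snd p))"
proof -
  obtain M0 where M0: "M0 \<ge> 0" "\<And>y. y \<in> {0..1} \<Longrightarrow> \<bar>htilde lam h y\<bar> \<le> M0"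
    using cont_bound[OF htilde_cont] by blast
  have c0: "continuous_on (UU \<times> {0..1}) (\<lambda>p. ff (fst p) (snd p))"
  proof (rule cont_box[where B="\<lambda>w. M0 * w"])
    show "continuous_on (UU \<times> {0<..1}) (\<lambda>p. ff (fst p) (snd p))"
      unfolding ff_def by (intro continuous_intros compc htilde_cont)
    show "\<bar>ff (fst p) (snd p)\<bar> \<le> M0 * snd p" if "p \<in> UU \<times> {0..1}" for p
    proof (cases "snd p = 0")
      case False
      then have "X (fst p) (snd p) \<in> {0..1}" using that X_mem by auto
      then show ?thesis unfolding ff_def using ineq1[of "snd p" "htilde lam h (X (fst p) (snd p))" M0 1] that M0
        by auto
    qed (simp add: ff_def)
  qed (auto intro!: continuous_intros)
  then show ?thesis .
qed

lemma P_C2: "\<exists>P' P''. C2on UU P P' P''"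
proof -
  note c0 = ff_cont
  obtain M1 where M1: "M1 \<ge> 0" "\<And>y. y \<in> {0..1} \<Longrightarrow> \<bar>h' y\<bar> \<le> M1"
    using cont_bound[OF C2on_D(4)[OF hC2]] by blast
  obtain M2 where M2: "M2 \<ge> 0" "\<And>y. y \<in> {0..1} \<Longrightarrow> \<bar>h'' y\<bar> \<le> M2"
    using cont_bound[OF C2on_D(3)[OF hC2]] by blast
  have c1: "continuous_on (UU \<times> {0..1}) (\<lambda>p. ffx (fst p) (snd p))"
  proof (rule cont_box[where B="\<lambda>w. M1 * w"])
    show "continuous_on (UU \<times> {0<..1}) (\<lambda>p. ffx (fst p) (snd p))"
      unfolding ffx_def by (intro continuous_intros compc Xsc C2on_D(4)[OF hC2])
    show "\<bar>ffx (fst p) (snd p)\<bar> \<le> M1 * snd p" if "p \<in> UU \<times> {0..1}" for p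
    proof (cases "snd p = 0")
      case False
      then have "X (fst p) (snd p) \<in> {0..1}" "0 \<le> Xs (fst p) (snd p)" "Xs (fst p) (snd p) \<le> 1"
        using that X_mem Xs_bound by auto
      then show ?thesis unfolding ffx_def
        using ineq1[of "snd p" "h' (X (fst p) (snd p))" M1 "Xs (fst p) (snd p)"] that M1 by auto
    qed (simp add: ffx_def)
  qed (auto intro!: continuous_intros)
  have c2: "continuous_on (UU \<times> {0..1}) (\<lambda>p. ffxx (fst p) (snd p))"
  proof (rule cont_box[where B="\<lambda>w. M2 * w + (4 * M1 / lam) * \<bar>w * ln w\<bar>"])
    show "continuous_on (UU \<times> {0<..1}) (\<lambda>p. ffxx (fst p) (snd p))"
      unfolding ffxx_def by (intro continuous_intros compc Xsc Xssc C2on_D(3,4)[OF hC2])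
    show "\<bar>ffxx (fst p) (snd p)\<bar> \<le> M2 * snd p + (4 * M1 / lam) * \<bar>snd p * ln (snd p)\<bar>"
      if "p \<in> UU \<times> {0..1}" for p
    proof (cases "snd p = 0")
      case False
      then have w: "0 < snd p" "snd p \<le> 1" using that by auto
      have "X (fst p) (snd p) \<in> {0..1}" "0 \<le> Xs (fst p) (snd p)" "Xs (fst p) (snd p) \<le> 1"
          "\<bar>Xss (fst p) (snd p)\<bar> \<le> 4 * \<bar>ln (snd p)\<bar> / lam"
        using that X_mem Xs_bound Xss_bound w by auto
      then have "\<bar>ffxx (fst p) (snd p)\<bar> \<le> M2 * snd p + M1 * (snd p * (4 * \<bar>ln (snd p)\<bar> / lam))"
        unfolding ffxx_def
        by (intro ineq3) (use M1 M2 w in auto)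
      also have "M1 * (snd p * (4 * \<bar>ln (snd p)\<bar> / lam)) = (4 * M1 / lam) * \<bar>snd p * ln (snd p)\<bar>"
        using w by (simp add: abs_mult)
      finally show ?thesis .
    qed (simp add: ffxx_def)
    have cw: "continuous_on {0..1} (\<lambda>w::real. \<bar>w * ln w\<bar>)" by (rule continuous_on_rabs[OF wlnw_cont])
    show "continuous_on {0..1} (\<lambda>w. M2 * w + (4 * M1 / lam) * \<bar>w * ln w\<bar>)"
      by (rule continuous_on_add[OF continuous_on_mult[OF continuous_on_const continuous_on_id]
            continuous_on_mult[OF continuous_on_const cw]])
  qed simp
  have "C2on UU (\<lambda>s. integral {0..1} (ff s)) (\<lambda>s. integral {0..1} (ffx s)) (\<lambda>s. integral {0..1} (ffxx s))"
    by (rule leib_C2[OF _ ff_d1 ff_d2 c0 c1 c2]) auto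
  then show ?thesis unfolding P_def[abs_def] by blast
qed

end


context lemsetup begin

lemma B_C2: "\<exists>B' B''. C2on UU (\<lambda>s. (- (2 / lam) / s) * P s) B' B''"
proof -
  define c where "c = - (2 / lam)"
  have d1: "((\<lambda>s. c / s) has_real_derivative -(c / s^2)) (at s)" if "s \<noteq> 0" for s :: real
    using that by (auto intro!: derivative_eq_intros simp: field_simps power2_eq_square)
  have d2: "((\<lambda>s. -(c / s^2)) has_real_derivative 2 * c / s^3) (at s)" if "s \<noteq> 0" for s :: real
    using that by (auto intro!: derivative_eq_intros simp: field_simps power2_eq_square power3_eq_cube)
  have k: "C2on UU (\<lambda>s. c / s) (\<lambda>s. -(c / s^2)) (\<lambda>s. 2 * c / s^3)"
    by (rule C2on_smooth) (auto intro!: d1 d2 continuous_intros)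
  obtain P' P'' where "C2on UU P P' P''" using P_C2 by blast
  from C2on_mult[OF k this] show ?thesis unfolding c_def by blast
qed

lemma Gfun_P:
  assumes s: "1/4 \<le> s" "s < 1"
  shows "Gfun lam h s = (- (2 / lam) / s) * P s"
proof -
  define K where "K = exp (lam / (2 * (1 - s)))"
  define W where "W x = K * fl (lam/2) 0 x" for x
  define W' where "W' x = K * (real 0 * fl (lam/2) (Suc 0) x - lam/2 * fl (lam/2) (Suc (Suc 0)) x)" for x
  define C where "C = - (lam / 2) * exp (lam / (1 - s))"
  have sU: "s \<in> UU" using s by auto
  have ffc: "continuous_on {0..1} (ff s)"
    by (rule continuous_on_compose2[OF ff_cont, of _ "\<lambda>w. (s, w)", simplified])
       (use sU in \<open>auto intro!: continuous_intros\<close>)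
  have Wexp: "W x = exp (lam / (2 * (1 - s)) + - (lam/2) / (1 - x))" if "x < 1" for x
    using that unfolding W_def K_def fl_def by (subst exp_add) simp
  have Ws: "W s = 1"
  proof -
    have "lam / (2 * (1 - s)) + - (lam/2) / (1 - s) = 0" using s by (simp add: field_simps)
    then show ?thesis using Wexp[of s] s by simp
  qed
  have W1: "W 1 = 0" by (simp add: W_def fl_def)
  have Wimg: "W ` {s..1} \<subseteq> {0..1}"
  proof
    fix y assume "y \<in> W ` {s..1}"
    then obtain x where x: "x \<in> {s..1}" "y = W x" by auto
    show "y \<in> {0..1}"
    proof (cases "x < 1")
      case True
      have "(lam/2) / (1 - s) \<le> (lam/2) / (1 - x)"
        by (rule divide_left_mono) (use x True s lam in auto)
      then have "lam / (2 * (1 - s)) + - (lam/2) / (1 - x) \<le> 0" by simp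
      then show ?thesis using x Wexp[OF True] by simp
    next
      case False
      then show ?thesis using x W1 by auto
    qed
  qed
  have Wc: "continuous_on {s..1} W"
    unfolding W_def by (intro continuous_intros fl_cont') (use lam in auto)
  have Wd: "(W has_real_derivative W' x) (at x within {s..1})" if "x \<in> {s..1} - {1}" for x
  proof -
    have "x < 1" using that by auto
    from DERIV_cmult[OF fl_deriv[OF this, of "lam/2" 0], of K]
    show ?thesis unfolding W_def[abs_def] W'_def by (rule has_field_derivative_at_within)
  qed
  have sub: "((\<lambda>x. W' x *\<^sub>R ff s (W x)) has_integral
      (integral {W s..W 1} (ff s) - integral {W 1..W s} (ff s))) {s..1}"
    by (rule has_integral_substitution_general[where s="{1}" and c=0 and d=1, OF _ _ Wimg ffc Wc Wd])
       (use s in auto)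
  then have sub': "((\<lambda>x. W' x *\<^sub>R ff s (W x)) has_integral - P s) {s..1}"
    unfolding Ws W1 P_def by simp
  have XW: "X s (W x) = x" if "s \<le> x" "x < 1" for x
  proof -
    have "ln (W x) = lam / (2 * (1 - s)) + - (lam/2) / (1 - x)" using Wexp[of x] that by simp
    moreover have "lam * (1 - s) / (lam - 2 * (1 - s) * (lam / (2 * (1 - s)) + - (lam / 2) / (1 - x))) = 1 - x"
      by (rule alg_X) (use that s lam in auto)
    ultimately show ?thesis unfolding X_def by simp
  qed
  have ieq: "W' x *\<^sub>R ff s (W x) = C * m x" if "x \<in> {s..1}" for x
  proof (cases "x < 1")
    case False
    then have "x = 1" using that by auto
    then show ?thesis by (simp add: W'_def fl_def)
  next
    case True
    define E where "E = exp (- (lam/2) / (1 - x))"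
    have half: "lam / (2 * p) + lam / (2 * p) = lam / p" for p :: real
      by (simp add: field_simps)
    have kk: "K * K = exp (lam / (1 - s))"
      unfolding K_def mult_exp_exp half ..
    have half2: "- (lam / 2) / q + - (lam / 2) / q = - lam / q" for q :: real
      by (simp add: field_simps)
    have ee: "E * E = exp (- lam / (1 - x))"
      unfolding E_def mult_exp_exp half2 ..
    have WE: "W x = K * E" "W' x = K * (- (lam/2) * (E / (1 - x)^2))"
      using True by (simp_all add: W_def W'_def E_def fl_def power2_eq_square)
    have "W' x *\<^sub>R ff s (W x) = W' x * (W x * htilde lam h x)"
      using XW[of x] True that by (simp add: ff_def)
    also have "\<dots> = - (lam/2) * (K * K) * (E * E) * (htilde lam h x / (1 - x)^2)"
      unfolding WE by (simp add: algebra_simps)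
    also have "\<dots> = C * m x" unfolding kk ee C_def by (simp add: algebra_simps)
    finally show ?thesis .
  qed
  have hi: "((\<lambda>x. C * m x) has_integral - P s) {s..1}"
    by (rule has_integral_eq[OF ieq sub'])
  define I where "I = integral {s..1} m"
  have mi: "(m has_integral I) {s..1}"
    unfolding I_def
    by (rule integrable_integral, rule integrable_continuous_interval, rule continuous_on_subset[OF m_cont]) (use s in auto)
  have CI: "C * I = - P s"
    using has_integral_unique[OF has_integral_mult_right[OF mi, of C] hi] .
  have "integral {0..s} m + I = 0"
  proof -
    have "integral {0..s} m + integral {s..1} m = integral {0..1} m"
      using Henstock_Kurzweil_Integration.integral_combine[where a=0 and c=s and b=1 and f=m] s integrable_continuous_interval[OF m_cont] by simp
    also have "\<dots> = 0" using int_m0 by (rule integral_unique)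
    finally show ?thesis unfolding I_def .
  qed
  then have J: "integral {0..s} m = - I" by linarith
  have Pv: "P s = (lam / 2) * exp (lam / (1 - s)) * I"
    using CI unfolding C_def by (simp add: algebra_simps)
  show ?thesis
    unfolding Gfun_def J Pv using s lam by (simp add: field_simps)
qed

end

theorem lemma5:
  fixes lam :: real and h :: "real \<Rightarrow> real"
  assumes "lam > 0" and "C2_on_01 h"
  shows "\<exists>g. continuous_on {0..1} g \<and> (\<forall>s\<in>{0<..<1}. g s = Gfun lam h s) \<and> C2_on_01 g"
proof -
  from assms(2) obtain h' h'' where hc: "C2on {0..1} h h' h''"
    unfolding C2_on_01_def C2on_def by blast
  interpret L: lemsetup lam h h' h''
    by standard (use assms(1) hc in auto)
  obtain A' A'' where A: "C2on {0..3/4} (\<lambda>s. exp (lam / (1 - s)) * L.Q s) A' A''"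
    using L.A_C2 by auto
  obtain B' B'' where B: "C2on {1/4..1} (\<lambda>s. (- (2 / lam) / s) * L.P s) B' B''"
    using L.B_C2 by auto
  have eq: "exp (lam / (1 - x)) * L.Q x = (- (2 / lam) / x) * L.P x" if "1/4 \<le> x" "x \<le> 3/4" for x
    using L.Gfun_Q[of x] L.Gfun_P[of x] that by simp
  define g where "g = (\<lambda>x. if x \<le> (1/4 + 3/4) / 2 then exp (lam / (1 - x)) * L.Q x
      else (- (2 / lam) / x) * L.P x)"
  have "\<exists>g' g''. C2on {0..1} g g' g''"
    using C2on_patch[OF A B _ _ _ eq] unfolding g_def by force
  then obtain g' g'' where gc: "C2on {0..1} g g' g''" by blast
  show ?thesis
  proof (intro exI[of _ g] conjI ballI)
    show "continuous_on {0..1} g" using C2on_D(5)[OF gc] .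
    show "C2_on_01 g" using C2on_01[OF gc] .
  next
    fix s :: real assume "s \<in> {0<..<1}"
    then show "g s = Gfun lam h s" unfolding g_def using L.Gfun_Q[of s] L.Gfun_P[of s] by auto
  qed
qed


end
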